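(* Let $k$ be a positive integer, $a=6k+1$, $b=9k+2$, $c=9k+3$, $S=\{a,b,c\}$ and $G=\langle S\rangle$. For $i\in\mathbb{N}^*$ define $A_{i,k}=\{3ia\}$, $B_{i,k}=[3ia+1,\,3ia+3i]$, $C_{i,k}=[3ia+3k+1,\,3ia+3k+2+3(i-1)]$, $D_{i,k}=A_{i,k}+\{a\}$, $E_{i,k}=B_{i,k}+\{a\}$, $F_{i,k}=[3ia+b,\,3ia+c+3i]$, $G_{i,k}=D_{i,k}+\{a\}$, $I_{i,k}=E_{i,k}+\{a\}$, $J_{i,k}=F_{i,k}+\{a\}$, let $T_{i,k}=A_{i,k}\cup B_{i,k}\cup C_{i,k}\cup D_{i,k}\cup E_{i,k}\cup F_{i,k}\cup G_{i,k}\cup I_{i,k}\cup J_{i,k}$, and let $H_{3,k}=\{0\}\cup(S+\{0,a\})\cup\bigcup_{i\in\mathbb{N}^*}T_{i,k}$. Then: (1) $H_{3,k}$ is a submonoid of $(\mathbb{N},+,0)$ containing $S$; (2) for every $i\in[1,k-1]$: $A_{i,k}<B_{i,k}<C_{i,k}<D_{i,k}<E_{i,k}<F_{i,k}<G_{i,k}<I_{i,k}<J_{i,k}$ and $J_{i,k}<A_{i+1,k}$; moreover $A_{k,k}<B_{k,k}<C_{k,k}<D_{k,k}$; (3) $[(3k+1)a,\infty[\ \subseteq H_{3,k}$; (4) $G=H_{3,k}$; (5) $H_{3,k}$ is a $3$-permutation numerical semigroup.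
   Context: $\mathbb{N}=\{0,1,2,\dots\}$, $\mathbb{N}^*=\mathbb{N}\setminus\{0\}$. A numerical semigroup is a submonoid $G$ of $(\mathbb{N},+,0)$ with $\mathbb{N}\setminus G$ finite; $\langle S\rangle$ is the submonoid generated by $S$. Writing the elements of a numerical semigroup as $0=g_0<g_1<g_2<\cdots$, it is an $n$-permutation numerical semigroup if it is generated by $\{g_1,\dots,g_n\}$ and for every $k\in\mathbb{N}$ the tuple $(g_{kn+1}\bmod n,\dots,g_{kn+n}\bmod n)$ contains exactly one representative of each residue class mod $n$. Notation: $[a,b]=\{x\in\mathbb{N}:a\le x\le b\}$, $[a,\infty[=\{x\in\mathbb{N}:x\ge a\}$; for $X,Y\subseteq\mathbb{N}$, $X+Y=\{x+y:x\in X,y\in Y\}$. For nonempty $X,Y$, $X<Y$ means $x<y$ for all $x\in X,y\in Y$. (The set $G_{i,k}$ is unrelated to $G=\langle S\rangle$.) *)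

theory Defs
  imports Main "HOL-Library.Infinite_Set"
begin

definition submonoid :: "nat set \<Rightarrow> bool" where
  "submonoid M \<longleftrightarrow> 0 \<in> M \<and> (\<forall>x\<in>M. \<forall>y\<in>M. x + y \<in> M)"

inductive_set gen :: "nat set \<Rightarrow> nat set" for S :: "nat set" where
  gen_zero: "0 \<in> gen S"
| gen_add: "x \<in> gen S \<Longrightarrow> s \<in> S \<Longrightarrow> x + s \<in> gen S"

definition numerical_semigroup :: "nat set \<Rightarrow> bool" where
  "numerical_semigroup G \<longleftrightarrow> submonoid G \<and> finite (UNIV - G)"

(* g_j = enumerate G j : elements of G in increasing order, g_0 = 0 *)
definition perm_numerical_semigroup :: "nat \<Rightarrow> nat set \<Rightarrow> bool" where
  "perm_numerical_semigroup n G \<longleftrightarrow>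
     numerical_semigroup G \<and>
     G = gen (enumerate G ` {1..n}) \<and>
     (\<forall>m::nat. bij_betw (\<lambda>j. enumerate G (m * n + j) mod n) {1..n} {..<n})"

definition sumset :: "nat set \<Rightarrow> nat set \<Rightarrow> nat set" where
  "sumset X Y = {x + y | x y. x \<in> X \<and> y \<in> Y}"

definition set_less :: "nat set \<Rightarrow> nat set \<Rightarrow> bool" where
  "set_less X Y \<longleftrightarrow> X \<noteq> {} \<and> Y \<noteq> {} \<and> (\<forall>x\<in>X. \<forall>y\<in>Y. x < y)"

definition aa :: "nat \<Rightarrow> nat" where "aa k = 6*k + 1"
definition bb :: "nat \<Rightarrow> nat" where "bb k = 9*k + 2"
definition cc :: "nat \<Rightarrow> nat" where "cc k = 9*k + 3"
definition SS :: "nat \<Rightarrow> nat set" where "SS k = {aa k, bb k, cc k}"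

definition Aik :: "nat \<Rightarrow> nat \<Rightarrow> nat set" where "Aik i k = {3*i*aa k}"
definition Bik :: "nat \<Rightarrow> nat \<Rightarrow> nat set" where
  "Bik i k = {3*i*aa k + 1 .. 3*i*aa k + 3*i}"
definition Cik :: "nat \<Rightarrow> nat \<Rightarrow> nat set" where
  "Cik i k = {3*i*aa k + 3*k + 1 .. 3*i*aa k + 3*k + 2 + 3*(i - 1)}"
definition Dik :: "nat \<Rightarrow> nat \<Rightarrow> nat set" where "Dik i k = sumset (Aik i k) {aa k}"
definition Eik :: "nat \<Rightarrow> nat \<Rightarrow> nat set" where "Eik i k = sumset (Bik i k) {aa k}"
definition Fik :: "nat \<Rightarrow> nat \<Rightarrow> nat set" where
  "Fik i k = {3*i*aa k + bb k .. 3*i*aa k + cc k + 3*i}"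
definition Gik :: "nat \<Rightarrow> nat \<Rightarrow> nat set" where "Gik i k = sumset (Dik i k) {aa k}"
definition Iik :: "nat \<Rightarrow> nat \<Rightarrow> nat set" where "Iik i k = sumset (Eik i k) {aa k}"
definition Jik :: "nat \<Rightarrow> nat \<Rightarrow> nat set" where "Jik i k = sumset (Fik i k) {aa k}"

definition Tik :: "nat \<Rightarrow> nat \<Rightarrow> nat set" where
  "Tik i k = Aik i k \<union> Bik i k \<union> Cik i k \<union> Dik i k \<union> Eik i k \<union> Fik i k
             \<union> Gik i k \<union> Iik i k \<union> Jik i k"

definition H3 :: "nat \<Rightarrow> nat set" where
  "H3 k = {0} \<union> sumset (SS k) {0, aa k} \<union> (\<Union>i\<in>{1..}. Tik i k)"

end

theory Submission
  imports Defs
begin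


definition Q :: "nat \<Rightarrow> nat \<Rightarrow> nat \<Rightarrow> bool" where
 "Q k i t \<longleftrightarrow> t \<le> 3*i \<or> (3*k+1 \<le> t \<and> t + 1 \<le> 3*k+3*i) \<or> (6*k+1 \<le> t \<and> t \<le> 6*k+1+3*i)
   \<or> (9*k+2 \<le> t \<and> t \<le> 9*k+3+3*i) \<or> (12*k+2 \<le> t \<and> t \<le> 12*k+2+3*i) \<or> (15*k+3 \<le> t \<and> t \<le> 15*k+4+3*i)"

definition sm :: "nat \<Rightarrow> nat \<Rightarrow> bool" where
 "sm k t \<longleftrightarrow> (t = 0 \<or> t = 6*k+1 \<or> t = 9*k+2 \<or> t = 9*k+3 \<or> t = 12*k+2 \<or> t = 15*k+3 \<or> t = 15*k+4)"

definition mem :: "nat \<Rightarrow> nat \<Rightarrow> nat \<Rightarrow> bool" where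
 "mem k i t \<longleftrightarrow> (i = 0 \<and> sm k t) \<or> (1 \<le> i \<and> i \<le> k \<and> Q k i t) \<or> k < i"

lemma Q1: "t \<le> 3*i \<Longrightarrow> Q k i t" unfolding Q_def by blast
lemma Q2: "3*k+1 \<le> t \<Longrightarrow> t + 1 \<le> 3*k+3*i \<Longrightarrow> Q k i t" unfolding Q_def by blast
lemma Q3: "6*k+1 \<le> t \<Longrightarrow> t \<le> 6*k+1+3*i \<Longrightarrow> Q k i t" unfolding Q_def by blast
lemma Q4: "9*k+2 \<le> t \<Longrightarrow> t \<le> 9*k+3+3*i \<Longrightarrow> Q k i t" unfolding Q_def by blast
lemma Q5: "12*k+2 \<le> t \<Longrightarrow> t \<le> 12*k+2+3*i \<Longrightarrow> Q k i t" unfolding Q_def by blast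
lemma Q6: "15*k+3 \<le> t \<Longrightarrow> t \<le> 15*k+4+3*i \<Longrightarrow> Q k i t" unfolding Q_def by blast

lemma memQ: "1 \<le> i \<Longrightarrow> i \<le> k \<Longrightarrow> Q k i t \<Longrightarrow> mem k i t" unfolding mem_def by blast
lemma memBig: "k < i \<Longrightarrow> mem k i t" unfolding mem_def by blast
lemma mem0: "sm k t \<Longrightarrow> mem k 0 t" unfolding mem_def by blast

lemma QE: "Q k i t \<Longrightarrow> (t \<le> 3*i \<Longrightarrow> P) \<Longrightarrow> (3*k+1 \<le> t \<Longrightarrow> t + 1 \<le> 3*k+3*i \<Longrightarrow> P)
  \<Longrightarrow> (6*k+1 \<le> t \<Longrightarrow> t \<le> 6*k+1+3*i \<Longrightarrow> P) \<Longrightarrow> (9*k+2 \<le> t \<Longrightarrow> t \<le> 9*k+3+3*i \<Longrightarrow> P)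
  \<Longrightarrow> (12*k+2 \<le> t \<Longrightarrow> t \<le> 12*k+2+3*i \<Longrightarrow> P) \<Longrightarrow> (15*k+3 \<le> t \<Longrightarrow> t \<le> 15*k+4+3*i \<Longrightarrow> P) \<Longrightarrow> P"
  unfolding Q_def by blast

lemma Qbig: "k < i \<Longrightarrow> t < 18*k+3 \<Longrightarrow> Q k i t"
proof -
  assume h: "k < i" "t < 18*k+3"
  show ?thesis
  proof (cases "t \<le> 3*i")
    case True then show ?thesis by (rule Q1)
  next
    case f1: False
    show ?thesis
    proof (cases "t < 6*k+1")
      case True then show ?thesis using h f1 by (intro Q2) linarith+
    next
      case f2: False
      show ?thesis
      proof (cases "t \<le> 6*k+1+3*i")
        case True then show ?thesis using f2 by (intro Q3) linarith+
      next
        case f3: False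
        show ?thesis
        proof (cases "t \<le> 9*k+3+3*i")
          case True then show ?thesis using f3 h by (intro Q4) linarith+
        next
          case f4: False
          show ?thesis
          proof (cases "t \<le> 12*k+2+3*i")
            case True then show ?thesis using f4 h by (intro Q5) linarith+
          next
            case f5: False
            then show ?thesis using h by (intro Q6) linarith+
          qed
        qed
      qed
    qed
  qed
qed

lemma Qk: "6*k+1 \<le> t \<Longrightarrow> t < 18*k+3 \<Longrightarrow> Q k k t"
proof -
  assume h: "6*k+1 \<le> t" "t < 18*k+3"
  show ?thesis
  proof (cases "t \<le> 6*k+1+3*k")
    case True then show ?thesis using h by (intro Q3) linarith+
  next
    case f3: False
    show ?thesis
    proof (cases "t \<le> 9*k+3+3*k")
      case True then show ?thesis using f3 h by (intro Q4) linarith+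
    next
      case f4: False
      show ?thesis
      proof (cases "t \<le> 12*k+2+3*k")
        case True then show ?thesis using f4 h by (intro Q5) linarith+
      next
        case f5: False
        then show ?thesis using h by (intro Q6) linarith+
      qed
    qed
  qed
qed

lemma divmod_eq: "(0::nat) < A \<Longrightarrow> t < A \<Longrightarrow> (A*i + t) div A = i \<and> (A*i + t) mod A = t"
  by simp

lemma div_ge: "(0::nat) < A \<Longrightarrow> A \<le> u \<Longrightarrow> i < (A*i + u) div A"
proof -
  assume "0 < A" "A \<le> u"
  then have "A*(i+1) \<le> A*i + u" by simp
  then have "(A*(i+1)) div A \<le> (A*i+u) div A" by (rule div_le_mono)
  then show ?thesis using \<open>0 < A\<close> by simp
qed


lemma sumset_single: "x \<in> sumset X {c} \<longleftrightarrow> c \<le> x \<and> x - c \<in> X"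
  unfolding sumset_def by force

lemma memA: "x \<in> Aik i k \<longleftrightarrow> x = 3*i*aa k" by (simp add: Aik_def)
lemma memB: "x \<in> Bik i k \<longleftrightarrow> 3*i*aa k + 1 \<le> x \<and> x \<le> 3*i*aa k + 3*i" by (simp add: Bik_def)
lemma memC: "1 \<le> i \<Longrightarrow> x \<in> Cik i k \<longleftrightarrow> 3*i*aa k + 3*k+1 \<le> x \<and> x + 1 \<le> 3*i*aa k + 3*k + 3*i"
  by (auto simp add: Cik_def)
lemma memD: "x \<in> Dik i k \<longleftrightarrow> x = 3*i*aa k + aa k" by (auto simp add: Dik_def sumset_single memA)
lemma memE: "x \<in> Eik i k \<longleftrightarrow> 3*i*aa k + aa k + 1 \<le> x \<and> x \<le> 3*i*aa k + aa k + 3*i"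
  by (auto simp add: Eik_def sumset_single memB)
lemma memF: "x \<in> Fik i k \<longleftrightarrow> 3*i*aa k + bb k \<le> x \<and> x \<le> 3*i*aa k + cc k + 3*i" by (simp add: Fik_def)
lemma memG: "x \<in> Gik i k \<longleftrightarrow> x = 3*i*aa k + aa k + aa k" by (auto simp add: Gik_def sumset_single memD)
lemma memI: "x \<in> Iik i k \<longleftrightarrow> 3*i*aa k + aa k + aa k + 1 \<le> x \<and> x \<le> 3*i*aa k + aa k + aa k + 3*i"
  by (auto simp add: Iik_def sumset_single memE)
lemma memJ: "x \<in> Jik i k \<longleftrightarrow> 3*i*aa k + bb k + aa k \<le> x \<and> x \<le> 3*i*aa k + cc k + 3*i + aa k"
  by (auto simp add: Jik_def sumset_single memF)

lemma sumset_3: "sumset {a,b,c} {0,d} = {a,b,c,a+d,b+d,c+d}"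
  unfolding sumset_def by (auto; metis add.right_neutral)

lemma memSm: "x \<in> {0} \<union> sumset (SS k) {0, aa k} \<longleftrightarrow> sm k x"
  unfolding SS_def sumset_3 sm_def aa_def bb_def cc_def by auto

lemma P_eq: "3*i*aa k = (18*k+3)*i" by (simp add: aa_def algebra_simps)

lemma memQ': "1 \<le> i \<Longrightarrow> Q k i u \<Longrightarrow> mem k i u"
  using memQ memBig by (cases "i \<le> k") auto

lemma memx_intro: "1 \<le> i \<Longrightarrow> x = (18*k+3)*i + u \<Longrightarrow> Q k i u \<Longrightarrow> u \<le> 15*k+4+3*i
   \<Longrightarrow> mem k (x div (18*k+3)) (x mod (18*k+3))"
proof -
  assume h: "1 \<le> i" "x = (18*k+3)*i + u" "Q k i u" "u \<le> 15*k+4+3*i"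
  show ?thesis
  proof (cases "u < 18*k+3")
    case True
    then have "x div (18*k+3) = i" "x mod (18*k+3) = u" using h(2) divmod_eq[of "18*k+3" u i] by auto
    then show ?thesis using memQ'[OF h(1) h(3)] by simp
  next
    case False
    then have "i < x div (18*k+3)" using h(2) div_ge[of "18*k+3" u i] by auto
    moreover have "k \<le> i" using False h(4) by linarith
    ultimately show ?thesis by (intro memBig) linarith
  qed
qed

lemma T_mem: "1 \<le> i \<Longrightarrow> x \<in> Tik i k \<Longrightarrow> mem k (x div (18*k+3)) (x mod (18*k+3))"
proof -
  assume i: "1 \<le> i" and x: "x \<in> Tik i k"
  define P where "P = 3*i*aa k"
  have P: "P = (18*k+3)*i" unfolding P_def by (rule P_eq)
  have a: "aa k = 6*k+1" "bb k = 9*k+2" "cc k = 9*k+3" by (simp_all add: aa_def bb_def cc_def)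
  have xe: "x = (18*k+3)*i + (x - P)" if "P \<le> x" using that P by simp
  from x consider "x \<in> Aik i k" | "x \<in> Bik i k" | "x \<in> Cik i k" | "x \<in> Dik i k" | "x \<in> Eik i k"
    | "x \<in> Fik i k" | "x \<in> Gik i k" | "x \<in> Iik i k" | "x \<in> Jik i k" unfolding Tik_def by blast
  then show ?thesis
  proof cases
    case 1 then have h: "P \<le> x" "x \<le> P" unfolding memA P_def by simp_all
    show ?thesis using i xe[OF h(1)] h by (intro memx_intro[of i x k "x-P"] Q1) auto
  next
    case 2 then have h: "P \<le> x" "x \<le> P + 3*i" unfolding memB P_def by simp_all
    show ?thesis using i xe[OF h(1)] h by (intro memx_intro[of i x k "x-P"] Q1) auto
  next
    case 3 then have h: "P + 3*k+1 \<le> x" "x + 1 \<le> P + 3*k + 3*i" unfolding memC[OF i] P_def by simp_all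
    show ?thesis using i xe h by (intro memx_intro[of i x k "x-P"] Q2) auto
  next
    case 4 then have h: "P + aa k \<le> x" "x \<le> P + aa k" unfolding memD P_def by simp_all
    have "P \<le> x" using h by simp
    show ?thesis using i xe[OF \<open>P \<le> x\<close>] h a by (intro memx_intro[of i x k "x-P"] Q3) auto
  next
    case 5 then have h: "P + aa k + 1 \<le> x" "x \<le> P + aa k + 3*i" unfolding memE P_def by simp_all
    have "P \<le> x" using h by simp
    show ?thesis using i xe[OF \<open>P \<le> x\<close>] h a by (intro memx_intro[of i x k "x-P"] Q3) auto
  next
    case 6 then have h: "P + bb k \<le> x" "x \<le> P + cc k + 3*i" unfolding memF P_def by simp_all
    have "P \<le> x" using h by simp
    show ?thesis using i xe[OF \<open>P \<le> x\<close>] h a by (intro memx_intro[of i x k "x-P"] Q4) auto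
  next
    case 7 then have h: "P + aa k + aa k \<le> x" "x \<le> P + aa k + aa k" unfolding memG P_def by simp_all
    have "P \<le> x" using h by simp
    show ?thesis using i xe[OF \<open>P \<le> x\<close>] h a by (intro memx_intro[of i x k "x-P"] Q5) auto
  next
    case 8 then have h: "P + aa k + aa k + 1 \<le> x" "x \<le> P + aa k + aa k + 3*i" unfolding memI P_def by simp_all
    have "P \<le> x" using h by simp
    show ?thesis using i xe[OF \<open>P \<le> x\<close>] h a by (intro memx_intro[of i x k "x-P"] Q5) auto
  next
    case 9 then have h: "P + bb k + aa k \<le> x" "x \<le> P + cc k + 3*i + aa k" unfolding memJ P_def by simp_all
    have "P \<le> x" using h by simp
    show ?thesis using i xe[OF \<open>P \<le> x\<close>] h a by (intro memx_intro[of i x k "x-P"] Q6) auto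
  qed
qed

lemma Q_T: "1 \<le> i \<Longrightarrow> Q k i t \<Longrightarrow> (18*k+3)*i + t \<in> Tik i k"
proof -
  assume i: "1 \<le> i" and q: "Q k i t"
  define P where "P = 3*i*aa k"
  have P: "(18*k+3)*i = P" unfolding P_def by (rule P_eq[symmetric])
  have a: "aa k = 6*k+1" "bb k = 9*k+2" "cc k = 9*k+3" by (simp_all add: aa_def bb_def cc_def)
  show ?thesis unfolding P
  proof (rule QE[OF q])
    assume "t \<le> 3*i"
    then have "P + t \<in> Aik i k \<or> P + t \<in> Bik i k" unfolding memA memB P_def[symmetric] by auto
    then show "P + t \<in> Tik i k" unfolding Tik_def by blast
  next
    assume "3*k+1 \<le> t" "t + 1 \<le> 3*k+3*i"
    then have "P + t \<in> Cik i k" unfolding memC[OF i] P_def[symmetric] by auto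
    then show "P + t \<in> Tik i k" unfolding Tik_def by blast
  next
    assume h: "6*k+1 \<le> t" "t \<le> 6*k+1+3*i"
    have "P + t \<in> Dik i k \<or> P + t \<in> Eik i k"
    proof (cases "t = aa k")
      case True then show ?thesis unfolding memD memE P_def[symmetric] by simp
    next
      case False then show ?thesis unfolding memD memE P_def[symmetric] using h a by simp
    qed
    then show "P + t \<in> Tik i k" unfolding Tik_def by blast
  next
    assume h: "9*k+2 \<le> t" "t \<le> 9*k+3+3*i"
    have "P + t \<in> Fik i k" unfolding memF P_def[symmetric] using h a by simp
    then show "P + t \<in> Tik i k" unfolding Tik_def by blast
  next
    assume h: "12*k+2 \<le> t" "t \<le> 12*k+2+3*i"
    have "P + t \<in> Gik i k \<or> P + t \<in> Iik i k"
    proof (cases "t = aa k + aa k")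
      case True then show ?thesis unfolding memG memI P_def[symmetric] by simp
    next
      case False then show ?thesis unfolding memG memI P_def[symmetric] using h a by simp
    qed
    then show "P + t \<in> Tik i k" unfolding Tik_def by blast
  next
    assume h: "15*k+3 \<le> t" "t \<le> 15*k+4+3*i"
    have "P + t \<in> Jik i k" unfolding memJ P_def[symmetric] using h a by simp
    then show "P + t \<in> Tik i k" unfolding Tik_def by blast
  qed
qed

definition Hx :: "nat \<Rightarrow> nat set" where
  "Hx k = {x. mem k (x div (18*k+3)) (x mod (18*k+3))}"

lemma H3_eq: assumes k1: "1 \<le> k" shows "H3 k = Hx k"
proof
  show "H3 k \<subseteq> Hx k"
  proof
    fix x assume "x \<in> H3 k"
    then consider "x \<in> {0} \<union> sumset (SS k) {0, aa k}" | i where "i \<in> {1..}" "x \<in> Tik i k"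
      unfolding H3_def by blast
    then show "x \<in> Hx k"
    proof cases
      case 1
      then have s: "sm k x" using memSm by blast
      then have "x < 18*k+3" using \<open>1 \<le> k\<close> unfolding sm_def by auto
      then show ?thesis using s by (simp add: Hx_def mem0)
    next
      case 2 then show ?thesis using T_mem[of i x k] by (simp add: Hx_def)
    qed
  qed
next
  show "Hx k \<subseteq> H3 k"
  proof
    fix x assume "x \<in> Hx k"
    define i where "i = x div (18*k+3)"
    define t where "t = x mod (18*k+3)"
    have m: "mem k i t" using \<open>x \<in> Hx k\<close> by (simp add: Hx_def i_def t_def)
    have x: "x = (18*k+3)*i + t" unfolding i_def t_def by simp
    have t: "t < 18*k+3" unfolding t_def by simp
    show "x \<in> H3 k"
    proof (cases "i = 0")
      case True
      then have "sm k t" using m unfolding mem_def by auto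
      then have "x \<in> {0} \<union> sumset (SS k) {0, aa k}" using True x memSm by simp
      then show ?thesis unfolding H3_def by blast
    next
      case False
      then have "Q k i t" using m Qbig[OF _ t] unfolding mem_def by auto
      then have "x \<in> Tik i k" using False x Q_T[of i k t] by simp
      then show ?thesis unfolding H3_def using False by auto
    qed
  qed
qed


lemma next_intro: assumes "(A::nat) \<le> t + s" "\<And>u. t + s = A + u \<Longrightarrow> M u"
  shows "(t+s < A \<and> X) \<or> (A \<le> t+s \<and> M (t+s-A))"
proof -
  have "t + s = A + (t + s - A)" using assms(1) by simp
  then have "M (t+s-A)" by (rule assms(2))
  then show ?thesis using assms(1) by simp
qed

lemma up_core:
  assumes k: "1 \<le> k" and t: "t < 18*k+3" and m: "mem k i t"
    and s: "s = 6*k+1 \<or> s = 9*k+2 \<or> s = 9*k+3"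
  shows "(t+s < 18*k+3 \<and> mem k i (t+s)) \<or> (18*k+3 \<le> t+s \<and> mem k (i+1) (t+s-(18*k+3)))"
proof -
  consider "k < i" | "i = k" | "i = 0" "sm k t" | "1 \<le> i" "i < k" "Q k i t"
    using m unfolding mem_def by force
  then show ?thesis
  proof cases
    case 1 then show ?thesis using memBig[of k i] memBig[of k "i+1"] by auto
  next
    case 2
    show ?thesis
    proof (cases "t+s < 18*k+3")
      case True
      have "Q k k (t+s)" using True s by (intro Qk) auto
      then show ?thesis using True 2 k memQ[of k k] by auto
    next
      case False then show ?thesis using 2 memBig[of k "k+1"] by auto
    qed
  next
    case 3
    have m0: "mem k 0 u" if "sm k u" for u using that by (rule mem0)
    have m1: "mem k (Suc 0) u" if "Q k 1 u" for u using that k by (intro memQ) auto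
    have k0: "k \<noteq> 0" "0 < k" "Suc 0 < 3*k" using k by simp_all
    from 3(2) s show ?thesis unfolding sm_def
      apply (elim disjE)
      by (simp_all add: 3 m0 m1 sm_def Q_def k0)
  next
    case 4
    have d: "3*(i+1) = 3*i+3" by simp
    note ik = 4(1,2) d
    show ?thesis
    proof (rule QE[OF 4(3)])
      assume h: "t \<le> 3*i"
      show ?thesis using s
        apply (elim disjE)
        by (intro disjI1 conjI memQ Q3 Q4; use ik h in linarith)+
    next
      assume h: "3*k+1 \<le> t" "t + 1 \<le> 3*k+3*i"
      show ?thesis using s
        apply (elim disjE)
        by (intro disjI1 conjI memQ Q4 Q5; use ik h in linarith)+
    next
      assume h: "6*k+1 \<le> t" "t \<le> 6*k+1+3*i"
      show ?thesis using s
        apply (elim disjE)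
        subgoal by (intro disjI1 conjI memQ Q5; use ik h in linarith)
        subgoal by (intro disjI1 conjI memQ Q6; use ik h in linarith)
        subgoal by (intro disjI1 conjI memQ Q6; use ik h in linarith)
        done
    next
      assume h: "9*k+2 \<le> t" "t \<le> 9*k+3+3*i"
      show ?thesis using s
        apply (elim disjE)
        subgoal by (intro disjI1 conjI memQ Q6; use ik h in linarith)
        subgoal by (rule next_intro[where M="mem k (i+1)"]; (intro memQ Q1)?; use ik h in linarith)
        subgoal by (rule next_intro[where M="mem k (i+1)"]; (intro memQ Q1)?; use ik h in linarith)
        done
    next
      assume h: "12*k+2 \<le> t" "t \<le> 12*k+2+3*i"
      show ?thesis using s
        apply (elim disjE)
        subgoal by (rule next_intro[where M="mem k (i+1)"]; (intro memQ Q1)?; use ik h in linarith)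
        subgoal by (rule next_intro[where M="mem k (i+1)"]; (intro memQ Q2)?; use ik h in linarith)
        subgoal by (rule next_intro[where M="mem k (i+1)"]; (intro memQ Q2)?; use ik h in linarith)
        done
    next
      assume h: "15*k+3 \<le> t" "t \<le> 15*k+4+3*i"
      show ?thesis using s
        apply (elim disjE)
        subgoal by (rule next_intro[where M="mem k (i+1)"]; (intro memQ Q2)?; use ik h in linarith)
        subgoal by (rule next_intro[where M="mem k (i+1)"]; (intro memQ Q3)?; use ik h in linarith)
        subgoal by (rule next_intro[where M="mem k (i+1)"]; (intro memQ Q3)?; use ik h in linarith)
        done
    qed
  qed
qed


definition downP :: "nat \<Rightarrow> nat \<Rightarrow> nat \<Rightarrow> nat \<Rightarrow> bool" where
  "downP k i t s \<longleftrightarrow> (s \<le> t \<and> mem k i (t-s)) \<or> (t < s \<and> 1 \<le> i \<and> mem k (i-1) (t+(18*k+3)-s))"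

lemma same_intro: assumes "s \<le> t" "\<And>u. t = s + u \<Longrightarrow> mem k i u" shows "downP k i t s"
proof -
  have "t = s + (t - s)" using assms(1) by simp
  then have "mem k i (t-s)" by (rule assms(2))
  then show ?thesis unfolding downP_def using assms(1) by blast
qed

lemma prev_intro: assumes "t < s" "i = j+1" "\<And>u. t + (18*k+3) = s + u \<Longrightarrow> mem k j u" "s \<le> t + (18*k+3)"
  shows "downP k i t s"
proof -
  have "t + (18*k+3) = s + (t + (18*k+3) - s)" using assms(4) by simp
  then have "mem k j (t + (18*k+3) - s)" by (rule assms(3))
  then show ?thesis unfolding downP_def using assms(1,2) by simp
qed

lemma memGe: "k \<le> j \<Longrightarrow> 1 \<le> k \<Longrightarrow> 6*k+1 \<le> u \<Longrightarrow> u < 18*k+3 \<Longrightarrow> mem k j u"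
  using Qk[of k u] memQ[of k k u] memBig[of k j u] by (cases "j = k") auto

lemma down_core:
  assumes k: "1 \<le> k" and t: "t < 18*k+3" and m: "mem k i t" and nz: "\<not> (i = 0 \<and> t = 0)"
  shows "\<exists>s. (s = 6*k+1 \<or> s = 9*k+2 \<or> s = 9*k+3) \<and> downP k i t s"
proof -
  consider "k < i" | "i = 0" "sm k t" | "1 \<le> i" "i \<le> k" "Q k i t"
    using m unfolding mem_def by force
  then show ?thesis
  proof cases
    case 1
    show ?thesis
    proof (intro exI[of _ "6*k+1"] conjI disjI1 refl)
      show "downP k i t (6 * k + 1)"
      proof (cases "6*k+1 \<le> t")
        case True then show ?thesis using 1 by (intro same_intro memBig) auto
      next
        case False
        then obtain j where j: "i = j+1" using 1 by (metis add.commute less_imp_Suc_add plus_1_eq_Suc)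
        show ?thesis using False j 1 k t by (intro prev_intro[OF _ j] memGe) auto
      qed
    qed
  next
    case 2
    note c2 = 2
    from 2(2) nz 2(1) consider "t = 6*k+1" | "t = 9*k+2" | "t = 9*k+3" | "t = 12*k+2" | "t = 15*k+3" | "t = 15*k+4"
      unfolding sm_def by auto
    then show ?thesis
    proof cases
      case 1 show ?thesis by (rule exI[of _ "6*k+1"], rule conjI, simp, intro same_intro) (use 1 in \<open>auto intro!: mem0 simp: sm_def c2\<close>)
    next
      case 2 show ?thesis by (rule exI[of _ "9*k+2"], rule conjI, simp, intro same_intro) (use 2 in \<open>auto intro!: mem0 simp: sm_def c2\<close>)
    next
      case 3 show ?thesis by (rule exI[of _ "9*k+3"], rule conjI, simp, intro same_intro) (use 3 in \<open>auto intro!: mem0 simp: sm_def c2\<close>)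
    next
      case 4 show ?thesis by (rule exI[of _ "6*k+1"], rule conjI, simp, intro same_intro) (use 4 in \<open>auto intro!: mem0 simp: sm_def c2\<close>)
    next
      case 5 show ?thesis by (rule exI[of _ "6*k+1"], rule conjI, simp, intro same_intro) (use 5 in \<open>auto intro!: mem0 simp: sm_def c2\<close>)
    next
      case 6 show ?thesis by (rule exI[of _ "6*k+1"], rule conjI, simp, intro same_intro) (use 6 in \<open>auto intro!: mem0 simp: sm_def c2\<close>)
    qed
  next
    case 3
    obtain j where j: "i = j+1" using 3 by (metis add.commute le_Suc_ex plus_1_eq_Suc)
    have d: "3*(j+1) = 3*j+3" "3*(i+1) = 3*i+3" by simp_all
    note ik = 3(1,2) d j
    have sameQ: "mem k i u" if "Q k i u" for u using 3 that by (intro memQ)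
    have prevQ: "mem k j u" if "1 \<le> j" "Q k j u" for u using 3 that j by (intro memQ) auto
    have prev0: "mem k j u" if "j = 0" "sm k u" for u using that mem0 by simp
    show ?thesis
    proof (rule QE[OF 3(3)])
      assume h: "t \<le> 3*i"
      consider "t = 0" | "t = 1" | "2 \<le> t" by linarith
      then show ?thesis
      proof cases
        case 1
        show ?thesis
        proof (rule exI[of _ "6*k+1"], rule conjI, simp, intro prev_intro[OF _ j])
          fix u assume u: "t + (18*k+3) = 6*k+1 + u"
          show "mem k j u"
          proof (cases "j = 0")
            case True then show ?thesis using u 1 by (intro prev0) (auto simp: sm_def)
          next
            case False then show ?thesis using u 1 by (intro prevQ Q5; use ik h in linarith)
          qed
        qed (use 1 in linarith)+
      next
        case 2
        show ?thesis
        proof (rule exI[of _ "9*k+2"], rule conjI, simp, intro prev_intro[OF _ j])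
          fix u assume u: "t + (18*k+3) = 9*k+2 + u"
          show "mem k j u"
          proof (cases "j = 0")
            case True then show ?thesis using u 2 by (intro prev0) (auto simp: sm_def)
          next
            case False then show ?thesis using u 2 by (intro prevQ Q4; use ik h in linarith)
          qed
        qed (use 2 k in linarith)+
      next
        case 22: 3
        show ?thesis
        proof (rule exI[of _ "9*k+3"], rule conjI, simp, intro prev_intro[OF _ j])
          fix u assume u: "t + (18*k+3) = 9*k+3 + u"
          show "mem k j u"
          proof (cases "j = 0")
            case True
            then have "t = 2 \<or> t = 3" using h j 22 by linarith
            then show ?thesis using u True by (intro prev0) (auto simp: sm_def)
          next
            case False then show ?thesis using u 22 by (intro prevQ Q4; use ik h in linarith)
          qed
        qed (use 22 h k ik in linarith)+
      qed
    next
      assume h: "3*k+1 \<le> t" "t + 1 \<le> 3*k+3*i"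
      show ?thesis
      proof (rule exI[of _ "6*k+1"], rule conjI, simp, intro prev_intro[OF _ j])
        fix u assume u: "t + (18*k+3) = 6*k+1 + u"
        show "mem k j u"
        proof (cases "j = 0")
          case True
          then have "t = 3*k+1 \<or> t = 3*k+2" using h j by linarith
          then show ?thesis using u True by (intro prev0) (auto simp: sm_def)
        next
          case False then show ?thesis using u by (intro prevQ Q6; use ik h in linarith)
        qed
      qed (use h k ik in linarith)+
    next
      assume h: "6*k+1 \<le> t" "t \<le> 6*k+1+3*i"
      show ?thesis by (rule exI[of _ "6*k+1"], rule conjI, simp, intro same_intro sameQ Q1; use ik h in linarith)
    next
      assume h: "9*k+2 \<le> t" "t \<le> 9*k+3+3*i"
      show ?thesis
      proof (cases "t = 9*k+2")
        case True show ?thesis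
          by (rule exI[of _ "9*k+2"], rule conjI, simp, intro same_intro sameQ Q1; use ik h True in linarith)
      next
        case False show ?thesis
          by (rule exI[of _ "9*k+3"], rule conjI, simp, intro same_intro sameQ Q1; use ik h False in linarith)
      qed
    next
      assume h: "12*k+2 \<le> t" "t \<le> 12*k+2+3*i"
      show ?thesis by (rule exI[of _ "6*k+1"], rule conjI, simp, intro same_intro sameQ Q3; use ik h in linarith)
    next
      assume h: "15*k+3 \<le> t" "t \<le> 15*k+4+3*i"
      show ?thesis by (rule exI[of _ "6*k+1"], rule conjI, simp, intro same_intro sameQ Q4; use ik h in linarith)
    qed
  qed
qed


lemma HxI: "t < 18*k+3 \<Longrightarrow> mem k i t \<Longrightarrow> (18*k+3)*i + t \<in> Hx k"
  unfolding Hx_def using divmod_eq[of "18*k+3" t i] by simp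


lemma SS_cases: "s \<in> SS k \<Longrightarrow> s = 6*k+1 \<or> s = 9*k+2 \<or> s = 9*k+3"
  unfolding SS_def aa_def bb_def cc_def by auto

lemma Hx_up: assumes k: "1 \<le> k" and x: "x \<in> Hx k" and s: "s \<in> SS k" shows "x + s \<in> Hx k"
proof -
  define i where "i = x div (18*k+3)"
  define t where "t = x mod (18*k+3)"
  have xe: "x = (18*k+3)*i + t" unfolding i_def t_def by simp
  have t: "t < 18*k+3" unfolding t_def by simp
  have m: "mem k i t" using x unfolding Hx_def i_def t_def by simp
  have s': "s = 6*k+1 \<or> s = 9*k+2 \<or> s = 9*k+3" using SS_cases[OF s] .
  have sA: "s < 18*k+3" using s' k by auto
  from up_core[OF k t m s'] show ?thesis
  proof
    assume h: "t + s < 18*k+3 \<and> mem k i (t+s)"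
    have "(18*k+3)*i + (t+s) \<in> Hx k" using h by (intro HxI) auto
    then show ?thesis using xe by (simp add: add.assoc)
  next
    assume h: "18*k+3 \<le> t + s \<and> mem k (i+1) (t+s-(18*k+3))"
    have "(18*k+3)*(i+1) + (t+s-(18*k+3)) \<in> Hx k" using h t sA by (intro HxI) auto
    moreover have "(18*k+3)*(i+1) + (t+s-(18*k+3)) = x + s" using xe h by (simp add: algebra_simps)
    ultimately show ?thesis by simp
  qed
qed

lemma Hx_down: assumes k: "1 \<le> k" and x: "x \<in> Hx k" and nz: "x \<noteq> 0"
  shows "\<exists>s\<in>SS k. s \<le> x \<and> x - s \<in> Hx k"
proof -
  define i where "i = x div (18*k+3)"
  define t where "t = x mod (18*k+3)"
  have xe: "x = (18*k+3)*i + t" unfolding i_def t_def by simp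
  have t: "t < 18*k+3" unfolding t_def by simp
  have m: "mem k i t" using x unfolding Hx_def i_def t_def by simp
  have n: "\<not> (i = 0 \<and> t = 0)" using nz xe by auto
  obtain s where s: "s = 6*k+1 \<or> s = 9*k+2 \<or> s = 9*k+3" and d: "downP k i t s"
    using down_core[OF k t m n] by blast
  have sS: "s \<in> SS k" using s unfolding SS_def aa_def bb_def cc_def by auto
  have sA: "s < 18*k+3" using s k by auto
  from d show ?thesis unfolding downP_def
  proof
    assume h: "s \<le> t \<and> mem k i (t - s)"
    have "(18*k+3)*i + (t-s) \<in> Hx k" using h t by (intro HxI) auto
    moreover have "(18*k+3)*i + (t-s) = x - s" "s \<le> x" using xe h by auto
    ultimately show ?thesis using sS by auto
  next
    assume h: "t < s \<and> 1 \<le> i \<and> mem k (i - 1) (t + (18*k+3) - s)"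
    have "(18*k+3)*(i-1) + (t + (18*k+3) - s) \<in> Hx k" using h t by (intro HxI) auto
    moreover have "(18*k+3)*(i-1) + (t + (18*k+3) - s) = x - s" "s \<le> x"
    proof -
      obtain j where j: "i = j+1" using h by (metis add.commute le_Suc_ex plus_1_eq_Suc)
      have "x = (18*k+3)*j + (18*k+3) + t" using xe j by (simp add: algebra_simps)
      then show "(18*k+3)*(i-1) + (t + (18*k+3) - s) = x - s" "s \<le> x" using j h sA by auto
    qed
    ultimately show ?thesis using sS by auto
  qed
qed

lemma gen_add: "y \<in> gen S \<Longrightarrow> x \<in> gen S \<Longrightarrow> x + y \<in> gen S"
proof (induction y rule: gen.induct)
  case gen_zero then show ?case by simp
next
  case (gen_add y s)
  have "x + y + s \<in> gen S" by (rule gen.gen_add[OF gen_add.IH[OF gen_add.prems] gen_add.hyps(2)])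
  then show ?case by (simp add: add.assoc)
qed

lemma gen_sub_Hx: assumes k: "1 \<le> k" shows "x \<in> gen (SS k) \<Longrightarrow> x \<in> Hx k"
proof (induction x rule: gen.induct)
  case gen_zero
  have "mem k 0 0" by (intro mem0) (simp add: sm_def)
  then show ?case unfolding Hx_def by simp
next
  case (gen_add x s) then show ?case using Hx_up k by blast
qed

lemma Hx_sub_gen: assumes k: "1 \<le> k" shows "x \<in> Hx k \<Longrightarrow> x \<in> gen (SS k)"
proof (induction x rule: less_induct)
  case (less x)
  show ?case
  proof (cases "x = 0")
    case True then show ?thesis by (simp add: gen.gen_zero)
  next
    case False
    then obtain s where s: "s \<in> SS k" "s \<le> x" "x - s \<in> Hx k" using Hx_down[OF k less.prems] by blast
    have "s > 0" using s(1) unfolding SS_def aa_def bb_def cc_def by auto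
    then have "x - s < x" using False by simp
    then have "x - s \<in> gen (SS k)" using less.IH s(3) by blast
    then have "x - s + s \<in> gen (SS k)" using s(1) by (rule gen.gen_add)
    then show ?thesis using s(2) by simp
  qed
qed

lemma gen_eq: "1 \<le> k \<Longrightarrow> gen (SS k) = H3 k"
  using gen_sub_Hx Hx_sub_gen H3_eq by blast

lemma threshold: assumes k: "1 \<le> k" and x: "(3*k+1) * aa k \<le> x" shows "x \<in> Hx k"
proof -
  define i where "i = x div (18*k+3)"
  define t where "t = x mod (18*k+3)"
  have xe: "x = (18*k+3)*i + t" unfolding i_def t_def by simp
  have t: "t < 18*k+3" unfolding t_def by simp
  have e: "(3*k+1) * aa k = (18*k+3)*k + (6*k+1)" unfolding aa_def by (simp add: algebra_simps)
  have "k \<le> i"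
  proof (rule ccontr)
    assume "\<not> k \<le> i"
    then have "i + 1 \<le> k" by simp
    then have "(18*k+3)*(i+1) \<le> (18*k+3)*k" by (rule mult_le_mono2)
    then show False using x e xe t by (simp add: algebra_simps)
  qed
  have "mem k i t"
  proof (cases "i = k")
    case True
    then have "6*k+1 \<le> t" using x e xe by simp
    then show ?thesis using True k t by (intro memGe) auto
  next
    case False then show ?thesis using \<open>k \<le> i\<close> by (intro memBig) simp
  qed
  then show ?thesis unfolding Hx_def i_def t_def by simp
qed


lemma sl: "x0 \<in> X \<Longrightarrow> y0 \<in> Y \<Longrightarrow> (\<And>x y. x \<in> X \<Longrightarrow> y \<in> Y \<Longrightarrow> x < y) \<Longrightarrow> set_less X Y"
  unfolding set_less_def by blast

lemma ord1: assumes i: "1 \<le> i" "i \<le> k"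
  shows "set_less (Aik i k) (Bik i k) \<and> set_less (Bik i k) (Cik i k) \<and> set_less (Cik i k) (Dik i k)"
proof -
  define P where "P = 3*i*aa k"
  have i': "Suc 0 \<le> i" using i by simp
  have a: "aa k = 6*k+1" "bb k = 9*k+2" "cc k = 9*k+3" by (simp_all add: aa_def bb_def cc_def)
  note mC = memC[OF i(1)]
  have 1: "set_less (Aik i k) (Bik i k)"
    by (rule sl[of "P" _ "P+1"]; unfold memA memB P_def[symmetric]; use i a in linarith)
  have 2: "set_less (Bik i k) (Cik i k)"
    by (rule sl[of "P+1" _ "P+3*k+1"]; unfold memB mC P_def[symmetric]; use i a in linarith)
  have 3: "set_less (Cik i k) (Dik i k)"
    by (rule sl[of "P+3*k+1" _ "P+aa k"]; unfold mC memD P_def[symmetric]; use i a in linarith)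
  show ?thesis using 1 2 3 by blast
qed

lemma ord2: assumes i: "1 \<le> i" "i < k"
  shows "set_less (Dik i k) (Eik i k) \<and> set_less (Eik i k) (Fik i k) \<and> set_less (Fik i k) (Gik i k)
   \<and> set_less (Gik i k) (Iik i k) \<and> set_less (Iik i k) (Jik i k) \<and> set_less (Jik i k) (Aik (i+1) k)"
proof -
  define P where "P = 3*i*aa k"
  have i': "Suc 0 \<le> i" using i by simp
  have a: "aa k = 6*k+1" "bb k = 9*k+2" "cc k = 9*k+3" by (simp_all add: aa_def bb_def cc_def)
  have P1: "3*(i+1)*aa k = P + 3*aa k" unfolding P_def by (simp add: algebra_simps)
  have 1: "set_less (Dik i k) (Eik i k)"
    by (rule sl[of "P+aa k" _ "P+aa k+1"]; unfold memD memE P_def[symmetric]; use i a in linarith)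
  have 2: "set_less (Eik i k) (Fik i k)"
    by (rule sl[of "P+aa k+1" _ "P+bb k"]; unfold memE memF P_def[symmetric]; use i a in linarith)
  have 3: "set_less (Fik i k) (Gik i k)"
    by (rule sl[of "P+bb k" _ "P+aa k+aa k"]; unfold memF memG P_def[symmetric]; use i a in linarith)
  have 4: "set_less (Gik i k) (Iik i k)"
    by (rule sl[of "P+aa k+aa k" _ "P+aa k+aa k+1"]; unfold memG memI P_def[symmetric]; use i a in linarith)
  have 5: "set_less (Iik i k) (Jik i k)"
    by (rule sl[of "P+aa k+aa k+1" _ "P+bb k+aa k"]; unfold memI memJ P_def[symmetric]; use i a in linarith)
  have 6: "set_less (Jik i k) (Aik (i+1) k)"
    by (rule sl[of "P+bb k+aa k" _ "P+3*aa k"]; unfold memJ memA P1 P_def[symmetric]; use i a in linarith)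
  show ?thesis using 1 2 3 4 5 6 by blast
qed


definition ec :: "nat \<Rightarrow> int" where "ec r = (if r = 0 then 1 else if r = 1 then 4 else -5)"
definition Gf :: "nat \<Rightarrow> int" where "Gf x = (if x mod 3 = 0 then 0 else if x mod 3 = 1 then 1 else 5)"
definition w :: "nat set \<Rightarrow> nat \<Rightarrow> int" where "w M h = (if h \<in> M \<and> 0 < h then ec (h mod 3) else 0)"
definition Fs :: "nat set \<Rightarrow> nat \<Rightarrow> int" where "Fs M x = (\<Sum>h<x. w M h)"
definition Bal :: "int \<Rightarrow> bool" where "Bal d \<longleftrightarrow> d \<in> {0,1,4,5,-1,-4,-5}"

lemma Gf_mod: "a mod 3 = b mod 3 \<Longrightarrow> Gf a = Gf b" unfolding Gf_def by simp

lemma Gf_step: "Gf (Suc x) = Gf x + ec (x mod 3)"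
proof -
  have "x mod 3 = 0 \<or> x mod 3 = 1 \<or> x mod 3 = 2" by auto
  moreover have "Suc x mod 3 = (if x mod 3 = 2 then 0 else Suc (x mod 3))" by (simp add: mod_Suc)
  ultimately show ?thesis unfolding Gf_def ec_def by auto
qed

lemma Gf_bal: "Bal (Gf y - Gf z)"
  unfolding Gf_def Bal_def by auto

lemma Fs_Suc: "Fs M (Suc x) = Fs M x + w M x" unfolding Fs_def by simp

lemma Fs_split: "p \<le> x \<Longrightarrow> Fs M x = Fs M p + (\<Sum>h\<in>{p..<x}. w M h)"
proof (induction x rule: dec_induct)
  case base then show ?case by simp
next
  case (step x) then show ?case by (simp add: Fs_Suc)
qed

lemma chunk:
  assumes F0: "Fs M p = 0" and pu: "p + 3*u < q" and qv: "q + 3*v + 1 < e"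
    and qm: "q mod 3 = (p+1) mod 3"
    and mm: "\<And>h. p \<le> h \<Longrightarrow> h < e \<Longrightarrow> ((h \<in> M \<and> 0 < h) \<longleftrightarrow> (h \<le> p+3*u \<or> (q \<le> h \<and> h \<le> q+3*v+1)))"
  shows "Fs M e = 0 \<and> (\<forall>x. p \<le> x \<longrightarrow> x \<le> e \<longrightarrow> Bal (Fs M x))"
proof -
  define \<psi> where "\<psi> x = (if x \<le> p+3*u+1 then x else if x \<le> q then p+1 else if x \<le> q+3*v+2 then x else p)" for x
  have claim: "(\<Sum>h\<in>{p..<x}. w M h) = Gf (\<psi> x) - Gf p" if "p \<le> x" "x \<le> e" for x
    using that
  proof (induction x rule: dec_induct)
    case base then show ?case by (simp add: \<psi>_def)
  next
    case (step x)
    have xe: "x < e" using step by simp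
    have wx: "w M x = (if x \<le> p+3*u \<or> (q \<le> x \<and> x \<le> q+3*v+1) then ec (x mod 3) else 0)"
      using mm[OF step(1) xe] unfolding w_def by auto
    have IH: "(\<Sum>h\<in>{p..<x}. w M h) = Gf (\<psi> x) - Gf p" using step by simp
    have "Gf (\<psi> (Suc x)) = Gf (\<psi> x) + w M x"
    proof -
      consider "x \<le> p+3*u" | "x = p+3*u+1" "x < q" | "p+3*u+1 < x" "x < q" | "x = q" | "q < x" "x \<le> q+3*v+1"
        | "x = q+3*v+2" | "q+3*v+2 < x" by linarith
      then show ?thesis
      proof cases
        case 1 then show ?thesis using pu wx by (simp add: \<psi>_def Gf_step)
      next
        case 2
        have "Gf (p+3*u+1) = Gf (p+1)" by (rule Gf_mod) presburger
        then show ?thesis using 2 pu wx by (simp add: \<psi>_def)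
      next
        case 3 then show ?thesis using pu wx by (simp add: \<psi>_def)
      next
        case 4
        have "Gf q = Gf (p+1)" by (rule Gf_mod) (use qm in presburger)
        then show ?thesis using 4 pu wx by (simp add: \<psi>_def Gf_step)
      next
        case 5 then show ?thesis using pu wx by (simp add: \<psi>_def Gf_step)
      next
        case 6
        have "Gf (q+3*v+2) = Gf p" by (rule Gf_mod) (use qm in presburger)
        then show ?thesis using 6 pu wx by (simp add: \<psi>_def)
      next
        case 7 then show ?thesis using pu wx by (simp add: \<psi>_def)
      qed
    qed
    then show ?case using IH step(1) by simp
  qed
  have pe: "p \<le> e" using pu qv by simp
  have "Gf (\<psi> e) = Gf p"
  proof (cases "e \<le> q+3*v+2")
    case True
    then have "e = q+3*v+2" using qv by simp
    then have "Gf e = Gf p" using qm by (intro Gf_mod) presburger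
    then show ?thesis using True pu qv by (simp add: \<psi>_def)
  next
    case False then show ?thesis using pu qv by (simp add: \<psi>_def)
  qed
  then have "Fs M e = 0" using Fs_split[OF pe, of M] claim[OF pe order.refl] F0 by simp
  moreover have "Bal (Fs M x)" if "p \<le> x" "x \<le> e" for x
    using Fs_split[OF that(1), of M] claim[OF that] F0 Gf_bal by simp
  ultimately show ?thesis by blast
qed

lemma Fs_const: "x \<le> y \<Longrightarrow> (\<And>z. x \<le> z \<Longrightarrow> z < y \<Longrightarrow> w M z = 0) \<Longrightarrow> Fs M y = Fs M x"
proof (induction y rule: dec_induct)
  case base then show ?case by simp
next
  case (step y) then show ?case by (simp add: Fs_Suc)
qed

lemma bal_mod0: "Bal d \<Longrightarrow> d mod 3 = 0 \<Longrightarrow> d = 0"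
  unfolding Bal_def by auto

lemma ec_mod: "ec r mod 3 = 1" unfolding ec_def by auto

lemma trip: assumes "r1 < 3" "r2 < 3" "r3 < 3" "Bal (ec r1 + ec r2)" "ec r1 + ec r2 + ec r3 = 0"
  shows "r1 \<noteq> r2 \<and> r1 \<noteq> r3 \<and> r2 \<noteq> r3"
proof -
  have "r1 = 0 \<or> r1 = 1 \<or> r1 = 2" "r2 = 0 \<or> r2 = 1 \<or> r2 = 2" "r3 = 0 \<or> r3 = 1 \<or> r3 = 2" using assms by auto
  then show ?thesis using assms(4,5) unfolding ec_def Bal_def by auto
qed

lemma bij3: assumes "f 1 \<noteq> f 2" "f 1 \<noteq> f 3" "f 2 \<noteq> f 3" "f 1 < (3::nat)" "f 2 < 3" "f 3 < 3"
  shows "bij_betw f {1..3::nat} {..<3}"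
proof -
  have e: "{1..3::nat} = {1,2,3}" by auto
  have inj: "inj_on f {1..3::nat}" unfolding e using assms(1-3) by (auto simp: inj_on_def)
  have sub: "f ` {1..3} \<subseteq> {..<3}" unfolding e using assms(4-6) by auto
  have "card (f ` {1..3}) = 3" using card_image[OF inj] by simp
  then have "f ` {1..3} = {..<3}" using sub by (intro card_subset_eq) auto
  then show ?thesis using inj unfolding bij_betw_def by simp
qed


lemma chunkB:
  assumes F0: "Fs M (B + l) = 0" and B: "B mod 3 = 0" and lu: "l + 3*u < lq" and lv: "lq + 3*v + 1 < r"
    and lm: "lq mod 3 = (l+1) mod 3"
    and mm: "\<And>t. l \<le> t \<Longrightarrow> t < r \<Longrightarrow> ((B + t \<in> M \<and> 0 < B + t) \<longleftrightarrow> (t \<le> l + 3*u \<or> (lq \<le> t \<and> t \<le> lq + 3*v + 1)))"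
  shows "Fs M (B + r) = 0 \<and> (\<forall>x. B + l \<le> x \<longrightarrow> x \<le> B + r \<longrightarrow> Bal (Fs M x))"
proof (rule chunk[OF F0])
  show "B + l + 3 * u < B + lq" using lu by simp
  show "B + lq + 3 * v + 1 < B + r" using lv by simp
  show "(B + lq) mod 3 = (B + l + 1) mod 3" using B lm by (metis mod_add_cong add.assoc)
  fix h assume h: "B + l \<le> h" "h < B + r"
  then have he: "h = B + (h - B)" by simp
  have "(h \<in> M \<and> 0 < h) \<longleftrightarrow> (B + (h-B) \<in> M \<and> 0 < B + (h-B))" using he by simp
  also have "\<dots> \<longleftrightarrow> ((h-B) \<le> l + 3*u \<or> (lq \<le> (h-B) \<and> (h-B) \<le> lq + 3*v + 1))"
    using h by (intro mm) auto
  also have "\<dots> \<longleftrightarrow> (h \<le> B + l + 3*u \<or> (B + lq \<le> h \<and> h \<le> B + lq + 3*v + 1))" using h by auto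
  finally show "(h \<in> M \<and> 0 < h) \<longleftrightarrow> (h \<le> B + l + 3*u \<or> (B + lq \<le> h \<and> h \<le> B + lq + 3*v + 1))" .
qed

lemma memblock: "1 \<le> i \<Longrightarrow> i \<le> k \<Longrightarrow> t < 18*k+3 \<Longrightarrow> (((18*k+3)*i + t \<in> Hx k \<and> 0 < (18*k+3)*i + t) \<longleftrightarrow> Q k i t)"
  unfolding Hx_def using divmod_eq[of "18*k+3" t i] by (auto simp: mem_def)

lemma Qc1: assumes n: "n = j+1" "n \<le> k" and t: "t < 6*k+1"
  shows "Q k n t \<longleftrightarrow> (t \<le> 0 + 3*n \<or> (3*k+1 \<le> t \<and> t \<le> 3*k+1 + 3*j + 1))"
proof
  assume "Q k n t"
  then show "t \<le> 0 + 3*n \<or> (3*k+1 \<le> t \<and> t \<le> 3*k+1 + 3*j + 1)"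
    by (rule QE) (use n t in linarith)+
next
  assume "t \<le> 0 + 3*n \<or> (3*k+1 \<le> t \<and> t \<le> 3*k+1 + 3*j + 1)"
  then show "Q k n t"
  proof
    assume "t \<le> 0 + 3*n" then show ?thesis by (intro Q1) simp
  next
    assume "3*k+1 \<le> t \<and> t \<le> 3*k+1 + 3*j + 1" then show ?thesis by (intro Q2) (use n in linarith)+
  qed
qed

lemma Qc2: assumes n: "n < k" and t: "6*k+1 \<le> t" "t < 12*k+2"
  shows "Q k n t \<longleftrightarrow> (t \<le> (6*k+1) + 3*n \<or> (9*k+2 \<le> t \<and> t \<le> (9*k+2) + 3*n + 1))"
proof
  assume "Q k n t"
  then show "t \<le> (6*k+1) + 3*n \<or> (9*k+2 \<le> t \<and> t \<le> (9*k+2) + 3*n + 1)"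
    by (rule QE) (use n t in linarith)+
next
  assume "t \<le> (6*k+1) + 3*n \<or> (9*k+2 \<le> t \<and> t \<le> (9*k+2) + 3*n + 1)"
  then show "Q k n t"
  proof
    assume "t \<le> (6*k+1) + 3*n" then show ?thesis using t by (intro Q3) simp_all
  next
    assume "9*k+2 \<le> t \<and> t \<le> (9*k+2) + 3*n + 1" then show ?thesis by (intro Q4) simp_all
  qed
qed

lemma Qc3: assumes n: "n < k" and t: "12*k+2 \<le> t" "t < 18*k+3"
  shows "Q k n t \<longleftrightarrow> (t \<le> (12*k+2) + 3*n \<or> (15*k+3 \<le> t \<and> t \<le> (15*k+3) + 3*n + 1))"
proof
  assume "Q k n t"
  then show "t \<le> (12*k+2) + 3*n \<or> (15*k+3 \<le> t \<and> t \<le> (15*k+3) + 3*n + 1)"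
    by (rule QE) (use n t in linarith)+
next
  assume "t \<le> (12*k+2) + 3*n \<or> (15*k+3 \<le> t \<and> t \<le> (15*k+3) + 3*n + 1)"
  then show "Q k n t"
  proof
    assume "t \<le> (12*k+2) + 3*n" then show ?thesis using t by (intro Q5) simp_all
  next
    assume "15*k+3 \<le> t \<and> t \<le> (15*k+3) + 3*n + 1" then show ?thesis by (intro Q6) simp_all
  qed
qed

lemma Bmod: "((18*k+3)*n) mod 3 = (0::nat)" by (simp add: mult.assoc)

lemma small_H: "y \<in> Hx k \<Longrightarrow> y < 18*k+3 \<Longrightarrow> sm k y"
  unfolding Hx_def mem_def by auto

lemma chunk1: assumes k: "1 \<le> k" and n: "1 \<le> n" "n \<le> k" and F: "Fs (Hx k) ((18*k+3)*n) = 0"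
  shows "Fs (Hx k) ((18*k+3)*n + (6*k+1)) = 0 \<and>
     (\<forall>x. (18*k+3)*n \<le> x \<longrightarrow> x \<le> (18*k+3)*n + (6*k+1) \<longrightarrow> Bal (Fs (Hx k) x))"
proof -
  obtain j where j: "n = j+1" using n by (metis add.commute le_Suc_ex plus_1_eq_Suc)
  have "Fs (Hx k) ((18*k+3)*n + (6*k+1)) = 0 \<and>
     (\<forall>x. (18*k+3)*n + 0 \<le> x \<longrightarrow> x \<le> (18*k+3)*n + (6*k+1) \<longrightarrow> Bal (Fs (Hx k) x))"
  proof (rule chunkB[where u=n and lq="3*k+1" and v=j])
    show "Fs (Hx k) ((18*k+3)*n + 0) = 0" using F by simp
    show "((18*k+3)*n) mod 3 = 0" by (rule Bmod)
    show "0 + 3*n < 3*k+1" using n by simp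
    show "3*k+1 + 3*j + 1 < 6*k+1" using n j by simp
    show "(3*k+1) mod 3 = (0+1) mod 3" by simp
    fix t assume t: "0 \<le> t" "t < 6*k+1"
    show "((18*k+3)*n + t \<in> Hx k \<and> 0 < (18*k+3)*n + t) \<longleftrightarrow> (t \<le> 0 + 3*n \<or> (3*k+1 \<le> t \<and> t \<le> 3*k+1 + 3*j + 1))"
      using memblock[OF n, of t] Qc1[OF j n(2) t(2)] t by simp
  qed
  then show ?thesis by simp
qed


lemma smallH_iff: "t < 18*k+3 \<Longrightarrow> (t \<in> Hx k \<longleftrightarrow> sm k t)"
  using small_H[of t k] HxI[of t k 0] mem0[of k t] by auto

lemma chunk2: assumes k: "1 \<le> k" and n: "1 \<le> n" "n < k" and F: "Fs (Hx k) ((18*k+3)*n + (6*k+1)) = 0"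
  shows "Fs (Hx k) ((18*k+3)*n + (12*k+2)) = 0 \<and>
     (\<forall>x. (18*k+3)*n + (6*k+1) \<le> x \<longrightarrow> x \<le> (18*k+3)*n + (12*k+2) \<longrightarrow> Bal (Fs (Hx k) x))"
proof (rule chunkB[where u=n and lq="9*k+2" and v=n])
  show "Fs (Hx k) ((18*k+3)*n + (6*k+1)) = 0" using F by simp
  show "((18*k+3)*n) mod 3 = 0" by (rule Bmod)
  show "6*k+1 + 3*n < 9*k+2" using n by simp
  show "9*k+2 + 3*n + 1 < 12*k+2" using n by simp
  show "(9*k+2) mod 3 = (6*k+1+1) mod 3" by presburger
  fix t assume t: "6*k+1 \<le> t" "t < 12*k+2"
  show "((18*k+3)*n + t \<in> Hx k \<and> 0 < (18*k+3)*n + t) \<longleftrightarrow> (t \<le> 6*k+1 + 3*n \<or> (9*k+2 \<le> t \<and> t \<le> 9*k+2 + 3*n + 1))"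
    using memblock[of n k t] Qc2[OF n(2) t] t n by simp
qed

lemma chunk3: assumes k: "1 \<le> k" and n: "1 \<le> n" "n < k" and F: "Fs (Hx k) ((18*k+3)*n + (12*k+2)) = 0"
  shows "Fs (Hx k) ((18*k+3)*n + (18*k+3)) = 0 \<and>
     (\<forall>x. (18*k+3)*n + (12*k+2) \<le> x \<longrightarrow> x \<le> (18*k+3)*n + (18*k+3) \<longrightarrow> Bal (Fs (Hx k) x))"
proof (rule chunkB[where u=n and lq="15*k+3" and v=n])
  show "Fs (Hx k) ((18*k+3)*n + (12*k+2)) = 0" using F by simp
  show "((18*k+3)*n) mod 3 = 0" by (rule Bmod)
  show "12*k+2 + 3*n < 15*k+3" using n by simp
  show "15*k+3 + 3*n + 1 < 18*k+3" using n by simp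
  show "(15*k+3) mod 3 = (12*k+2+1) mod 3" by presburger
  fix t assume t: "12*k+2 \<le> t" "t < 18*k+3"
  show "((18*k+3)*n + t \<in> Hx k \<and> 0 < (18*k+3)*n + t) \<longleftrightarrow> (t \<le> 12*k+2 + 3*n \<or> (15*k+3 \<le> t \<and> t \<le> 15*k+3 + 3*n + 1))"
    using memblock[of n k t] Qc3[OF n(2) t] t n by simp
qed

lemma block0: assumes k: "1 \<le> k"
  shows "Fs (Hx k) (18*k+3) = 0 \<and> (\<forall>x. x \<le> 18*k+3 \<longrightarrow> Bal (Fs (Hx k) x))"
proof -
  have F0: "Fs (Hx k) x = 0" if "x \<le> 6*k+1" for x
  proof -
    have "Fs (Hx k) x = Fs (Hx k) 0"
    proof (rule Fs_const)
      fix z assume z: "0 \<le> z" "z < x"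
      have "\<not> (z \<in> Hx k \<and> 0 < z)"
      proof
        assume "z \<in> Hx k \<and> 0 < z"
        then have "sm k z" "0 < z" using smallH_iff[of z k] z that by auto
        then show False using z that unfolding sm_def by auto
      qed
      then show "w (Hx k) z = 0" unfolding w_def by auto
    qed simp
    then show ?thesis by (simp add: Fs_def)
  qed
  have c1: "Fs (Hx k) (0 + (12*k+2)) = 0 \<and> (\<forall>x. 0 + (6*k+1) \<le> x \<longrightarrow> x \<le> 0 + (12*k+2) \<longrightarrow> Bal (Fs (Hx k) x))"
  proof (rule chunkB[where u=0 and lq="9*k+2" and v=0])
    show "Fs (Hx k) (0 + (6*k+1)) = 0" using F0 by simp
    show "(0::nat) mod 3 = 0" by simp
    show "6*k+1 + 3*0 < 9*k+2" using k by simp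
    show "9*k+2 + 3*0 + 1 < 12*k+2" using k by simp
    show "(9*k+2) mod 3 = (6*k+1+1) mod 3" by presburger
    fix t assume t: "6*k+1 \<le> t" "t < 12*k+2"
    show "(0 + t \<in> Hx k \<and> 0 < 0 + t) \<longleftrightarrow> (t \<le> 6*k+1 + 3*0 \<or> (9*k+2 \<le> t \<and> t \<le> 9*k+2 + 3*0 + 1))"
      using smallH_iff[of t k] t unfolding sm_def by auto
  qed
  have c2: "Fs (Hx k) (0 + (18*k+3)) = 0 \<and> (\<forall>x. 0 + (12*k+2) \<le> x \<longrightarrow> x \<le> 0 + (18*k+3) \<longrightarrow> Bal (Fs (Hx k) x))"
  proof (rule chunkB[where u=0 and lq="15*k+3" and v=0])
    show "Fs (Hx k) (0 + (12*k+2)) = 0" using c1 by simp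
    show "(0::nat) mod 3 = 0" by simp
    show "12*k+2 + 3*0 < 15*k+3" using k by simp
    show "15*k+3 + 3*0 + 1 < 18*k+3" using k by simp
    show "(15*k+3) mod 3 = (12*k+2+1) mod 3" by presburger
    fix t assume t: "12*k+2 \<le> t" "t < 18*k+3"
    show "(0 + t \<in> Hx k \<and> 0 < 0 + t) \<longleftrightarrow> (t \<le> 12*k+2 + 3*0 \<or> (15*k+3 \<le> t \<and> t \<le> 15*k+3 + 3*0 + 1))"
      using smallH_iff[of t k] t unfolding sm_def by auto
  qed
  have "Bal (Fs (Hx k) x)" if "x \<le> 18*k+3" for x
  proof -
    consider "x \<le> 6*k+1" | "6*k+1 \<le> x" "x \<le> 12*k+2" | "12*k+2 \<le> x" by linarith
    then show ?thesis
    proof cases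
      case 1 then show ?thesis using F0 by (simp add: Bal_def)
    next
      case 2 then show ?thesis using c1 by simp
    next
      case 3 then show ?thesis using c2 that by simp
    qed
  qed
  then show ?thesis using c2 by simp
qed

lemma blocks: assumes k: "1 \<le> k" and n: "1 \<le> n" "n \<le> k"
  shows "Fs (Hx k) ((18*k+3)*n) = 0 \<and> (\<forall>x. x \<le> (18*k+3)*n \<longrightarrow> Bal (Fs (Hx k) x))"
  using n
proof (induction n rule: dec_induct)
  case base then show ?case using block0[OF k] by simp
next
  case (step n)
  have n: "1 \<le> n" "n < k" using step by auto
  note IH = step.IH[OF less_imp_le[OF n(2)]]
  note c1 = chunk1[OF k n(1) less_imp_le[OF n(2)] conjunct1[OF IH]]
  note c2 = chunk2[OF k n conjunct1[OF c1]]
  note c3 = chunk3[OF k n conjunct1[OF c2]]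
  have e: "(18*k+3)*Suc n = (18*k+3)*n + (18*k+3)" by simp
  have "Bal (Fs (Hx k) x)" if "x \<le> (18*k+3)*Suc n" for x
  proof -
    consider "x \<le> (18*k+3)*n" | "(18*k+3)*n \<le> x" "x \<le> (18*k+3)*n + (6*k+1)"
      | "(18*k+3)*n + (6*k+1) \<le> x" "x \<le> (18*k+3)*n + (12*k+2)" | "(18*k+3)*n + (12*k+2) \<le> x" by linarith
    then show ?thesis
    proof cases
      case 1 then show ?thesis using IH by simp
    next
      case 2 then show ?thesis using c1 by simp
    next
      case 3 then show ?thesis using c2 by simp
    next
      case 4 then show ?thesis using c3 that e by simp
    qed
  qed
  moreover have "Fs (Hx k) ((18*k+3)*Suc n) = 0" unfolding e by (rule conjunct1[OF c3])
  ultimately show ?case by simp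
qed


lemma thr_eq: "(3*k+1) * aa k = (18*k+3)*k + (6*k+1)" unfolding aa_def by (simp add: algebra_simps)

lemma tail: assumes k: "1 \<le> k"
  shows "Fs (Hx k) ((18*k+3)*k + (6*k+1) + 3*j) = 0 \<and> (\<forall>x. x \<le> (18*k+3)*k + (6*k+1) + 3*j \<longrightarrow> Bal (Fs (Hx k) x))"
proof (induction j)
  case 0
  note b = blocks[OF k k order.refl]
  note c1 = chunk1[OF k k order.refl conjunct1[OF b]]
  have "Bal (Fs (Hx k) x)" if "x \<le> (18*k+3)*k + (6*k+1)" for x
  proof (cases "x \<le> (18*k+3)*k")
    case True then show ?thesis using b by simp
  next
    case False then show ?thesis using c1 that by simp
  qed
  then show ?case using c1 by simp
next
  case (Suc j)
  define B where "B = (18*k+3)*k + 3*(2*k+j)"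
  have Bm: "B mod 3 = 0" unfolding B_def by (simp add: mult.assoc)
  have e1: "B + 1 = (18*k+3)*k + (6*k+1) + 3*j" unfolding B_def by simp
  have e4: "B + 4 = (18*k+3)*k + (6*k+1) + 3*Suc j" unfolding B_def by simp
  have c: "Fs (Hx k) (B + 4) = 0 \<and> (\<forall>x. B + 1 \<le> x \<longrightarrow> x \<le> B + 4 \<longrightarrow> Bal (Fs (Hx k) x))"
  proof (rule chunkB[where u=0 and lq=2 and v=0])
    show "Fs (Hx k) (B + 1) = 0" using Suc.IH e1 by simp
    show "B mod 3 = 0" by (rule Bm)
    fix t :: nat assume t: "1 \<le> t" "t < 4"
    have "(3*k+1) * aa k \<le> B + t" unfolding thr_eq B_def using t by simp
    then have "B + t \<in> Hx k" using threshold[OF k] by blast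
    then show "(B + t \<in> Hx k \<and> 0 < B + t) \<longleftrightarrow> (t \<le> 1 + 3*0 \<or> (2 \<le> t \<and> t \<le> 2 + 3*0 + 1))" using t by auto
  qed simp_all
  have "Bal (Fs (Hx k) x)" if "x \<le> (18*k+3)*k + (6*k+1) + 3*Suc j" for x
  proof (cases "x \<le> B + 1")
    case True then show ?thesis using Suc.IH e1 by simp
  next
    case False then show ?thesis using c that e4 by simp
  qed
  then show ?case using c e4 by simp
qed

lemma allBal: "1 \<le> k \<Longrightarrow> Bal (Fs (Hx k) x)"
  using tail[of k x] by simp

lemma Hinf: assumes k: "1 \<le> k" shows "infinite (Hx k)"
  unfolding infinite_nat_iff_unbounded_le
proof
  fix m
  have "(3*k+1) * aa k + m \<in> Hx k" using threshold[OF k] by simp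
  then show "\<exists>n\<ge>m. n \<in> Hx k" by (intro exI[of _ "(3*k+1) * aa k + m"]) simp
qed

lemma g0: "0 \<in> M \<Longrightarrow> enumerate M 0 = (0::nat)"
  by (simp add: enumerate_0)

lemma nobetween: assumes inf: "infinite (M::nat set)" and a: "enumerate M n < z" "z < enumerate M (Suc n)" shows "z \<notin> M"
proof
  assume "z \<in> M"
  have "enumerate M (Suc n) = (LEAST s. s \<in> M \<and> enumerate M n < s)" by (rule enumerate_Suc''[OF inf])
  also have "\<dots> \<le> z" using \<open>z \<in> M\<close> a(1) by (intro Least_le) simp
  finally show False using a(2) by simp
qed

lemma Sstep: assumes inf: "infinite M" and z: "0 \<in> M"
  shows "Fs M (enumerate M (Suc n) + 1) = Fs M (enumerate M n + 1) + ec (enumerate M (Suc n) mod 3)"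
proof -
  let ?g = "enumerate M"
  have lt: "?g n < ?g (Suc n)" by (rule enumerate_step[OF inf])
  have inM: "?g (Suc n) \<in> M" by (rule enumerate_in_set[OF inf])
  have "Fs M (?g (Suc n) + 1) = Fs M (?g (Suc n)) + w M (?g (Suc n))" by (simp add: Fs_Suc)
  moreover have "w M (?g (Suc n)) = ec (?g (Suc n) mod 3)" using lt inM unfolding w_def by auto
  moreover have "Fs M (?g (Suc n)) = Fs M (?g n + 1)"
  proof (rule Fs_const)
    show "?g n + 1 \<le> ?g (Suc n)" using lt by simp
    fix z assume "?g n + 1 \<le> z" "z < ?g (Suc n)"
    then have "z \<notin> M" using nobetween[OF inf, of n z] by simp
    then show "w M z = 0" unfolding w_def by simp
  qed
  ultimately show ?thesis by simp
qed

lemma Smod: assumes inf: "infinite M" and z: "0 \<in> M"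
  shows "Fs M (enumerate M n + 1) mod 3 = int n mod 3"
proof (induction n)
  case 0
  have "Fs M (enumerate M 0 + 1) = 0" using g0[OF z] by (simp add: Fs_def w_def)
  then show ?case by simp
next
  case (Suc n)
  have "Fs M (enumerate M (Suc n) + 1) mod 3 = (Fs M (enumerate M n + 1) mod 3 + ec (enumerate M (Suc n) mod 3) mod 3) mod 3"
    unfolding Sstep[OF inf z] by (simp add: mod_add_eq)
  also have "\<dots> = (int n mod 3 + 1) mod 3" using Suc.IH ec_mod by simp
  also have "\<dots> = int (Suc n) mod 3" by presburger
  finally show ?case .
qed

lemma triple: assumes inf: "infinite M" and z: "0 \<in> M" and bal: "\<And>x. Bal (Fs M x)"
  shows "bij_betw (\<lambda>j. enumerate M (m*3 + j) mod 3) {1..3} {..<3}"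
proof -
  define S where "S n = Fs M (enumerate M n + 1)" for n
  define r where "r j = enumerate M (m*3 + j) mod 3" for j
  have St: "S (Suc n) = S n + ec (enumerate M (Suc n) mod 3)" for n unfolding S_def by (rule Sstep[OF inf z])
  have Sm: "S n mod 3 = int n mod 3" for n unfolding S_def by (rule Smod[OF inf z])
  have Sb: "Bal (S n)" for n unfolding S_def by (rule bal)
  have "S (m*3) mod 3 = 0" using Sm[of "m*3"] by simp
  then have S0: "S (m*3) = 0" by (rule bal_mod0[OF Sb])
  have e3: "m*3+3 = Suc(Suc(Suc(m*3)))" by simp
  have s1: "S (m*3+1) = ec (r 1)" using St[of "m*3"] S0 unfolding r_def by simp
  have s2: "S (m*3+2) = ec (r 1) + ec (r 2)" using St[of "m*3+1"] s1 unfolding r_def by simp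
  have s3': "S (m*3+3) = ec (r 1) + ec (r 2) + ec (r 3)" using St[of "m*3+2"] s2 unfolding r_def by (simp add: e3)
  have "S (m*3+3) mod 3 = 0" using Sm[of "m*3+3"] by presburger
  then have "S (m*3+3) = 0" by (rule bal_mod0[OF Sb])
  then have s3: "ec (r 1) + ec (r 2) + ec (r 3) = 0" using s3' by simp
  have b2: "Bal (ec (r 1) + ec (r 2))" using Sb[of "m*3+2"] s2 by simp
  have d: "r 1 \<noteq> r 2 \<and> r 1 \<noteq> r 3 \<and> r 2 \<noteq> r 3" by (rule trip[OF _ _ _ b2 s3]) (simp_all add: r_def)
  show ?thesis using d unfolding r_def by (intro bij3) simp_all
qed


lemma enum_vals: assumes k: "1 \<le> k"
  shows "enumerate (Hx k) 1 = aa k \<and> enumerate (Hx k) 2 = bb k \<and> enumerate (Hx k) 3 = cc k"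
proof -
  let ?M = "Hx k"
  have inf: "infinite ?M" by (rule Hinf[OF k])
  have z: "0 \<in> ?M" using smallH_iff[of 0 k] by (simp add: sm_def)
  have a: "aa k \<in> ?M" "bb k \<in> ?M" "cc k \<in> ?M" using smallH_iff[of _ k] k
    by (auto simp: sm_def aa_def bb_def cc_def)
  have e0: "enumerate ?M 0 = 0" by (rule g0[OF z])
  have e1: "enumerate ?M 1 = aa k"
  proof -
    have "enumerate ?M (Suc 0) = (LEAST s. s \<in> ?M \<and> enumerate ?M 0 < s)" by (rule enumerate_Suc''[OF inf])
    also have "\<dots> = aa k"
    proof (rule Least_equality)
      show "aa k \<in> ?M \<and> enumerate ?M 0 < aa k" using a e0 by (simp add: aa_def)
      fix y assume y: "y \<in> ?M \<and> enumerate ?M 0 < y"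
      show "aa k \<le> y"
      proof (rule ccontr)
        assume "\<not> aa k \<le> y"
        then have "y < 18*k+3" "y < 6*k+1" by (auto simp: aa_def)
        then have "sm k y" using y smallH_iff by blast
        then show False using \<open>y < 6*k+1\<close> y e0 by (auto simp: sm_def)
      qed
    qed
    finally show ?thesis by simp
  qed
  have e2: "enumerate ?M 2 = bb k"
  proof -
    have "enumerate ?M (Suc 1) = (LEAST s. s \<in> ?M \<and> enumerate ?M 1 < s)" by (rule enumerate_Suc''[OF inf])
    also have "\<dots> = bb k"
    proof (rule Least_equality)
      show "bb k \<in> ?M \<and> enumerate ?M 1 < bb k" using a e1 by (simp add: aa_def bb_def)
      fix y assume y: "y \<in> ?M \<and> enumerate ?M 1 < y"
      show "bb k \<le> y"
      proof (rule ccontr)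
        assume "\<not> bb k \<le> y"
        then have "y < 18*k+3" "y < 9*k+2" by (auto simp: bb_def)
        then have "sm k y" using y smallH_iff by blast
        then show False using \<open>y < 9*k+2\<close> y e1 by (auto simp: sm_def aa_def)
      qed
    qed
    finally show ?thesis by (simp add: numeral_2_eq_2)
  qed
  have e3: "enumerate ?M 3 = cc k"
  proof -
    have "enumerate ?M (Suc 2) = (LEAST s. s \<in> ?M \<and> enumerate ?M 2 < s)" by (rule enumerate_Suc''[OF inf])
    also have "\<dots> = cc k"
    proof (rule Least_equality)
      show "cc k \<in> ?M \<and> enumerate ?M 2 < cc k" using a e2 by (simp add: bb_def cc_def)
      fix y assume y: "y \<in> ?M \<and> enumerate ?M 2 < y"
      then show "cc k \<le> y" using e2 by (simp add: bb_def cc_def)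
    qed
    finally show ?thesis by (simp add: numeral_3_eq_3)
  qed
  show ?thesis using e1 e2 e3 by simp
qed

theorem lemma4p3:
  fixes k :: nat
  assumes "k \<ge> 1"
  shows "(submonoid (H3 k) \<and> SS k \<subseteq> H3 k)
    \<and> (\<forall>i\<in>{1..k-1}.
          set_less (Aik i k) (Bik i k) \<and> set_less (Bik i k) (Cik i k) \<and>
          set_less (Cik i k) (Dik i k) \<and> set_less (Dik i k) (Eik i k) \<and>
          set_less (Eik i k) (Fik i k) \<and> set_less (Fik i k) (Gik i k) \<and>
          set_less (Gik i k) (Iik i k) \<and> set_less (Iik i k) (Jik i k) \<and>
          set_less (Jik i k) (Aik (i+1) k))
    \<and> (set_less (Aik k k) (Bik k k) \<and> set_less (Bik k k) (Cik k k) \<and>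
       set_less (Cik k k) (Dik k k))
    \<and> {(3*k+1) * aa k ..} \<subseteq> H3 k
    \<and> gen (SS k) = H3 k
    \<and> perm_numerical_semigroup 3 (H3 k)"
proof -
  have k: "1 \<le> k" using assms by simp
  have HE: "H3 k = Hx k" by (rule H3_eq[OF k])
  have GE: "gen (SS k) = H3 k" by (rule gen_eq[OF k])
  have sm: "submonoid (H3 k)"
    unfolding submonoid_def GE[symmetric] using gen.gen_zero gen_add by blast
  have ss: "SS k \<subseteq> H3 k"
  proof
    fix s assume "s \<in> SS k"
    then have "0 + s \<in> gen (SS k)" by (intro gen.gen_add gen.gen_zero)
    then show "s \<in> H3 k" using GE by simp
  qed
  have p2: "\<forall>i\<in>{1..k-1}.
          set_less (Aik i k) (Bik i k) \<and> set_less (Bik i k) (Cik i k) \<and>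
          set_less (Cik i k) (Dik i k) \<and> set_less (Dik i k) (Eik i k) \<and>
          set_less (Eik i k) (Fik i k) \<and> set_less (Fik i k) (Gik i k) \<and>
          set_less (Gik i k) (Iik i k) \<and> set_less (Iik i k) (Jik i k) \<and>
          set_less (Jik i k) (Aik (i+1) k)"
  proof
    fix i assume "i \<in> {1..k-1}"
    then have i: "1 \<le> i" "i < k" using k by auto
    show "set_less (Aik i k) (Bik i k) \<and> set_less (Bik i k) (Cik i k) \<and>
          set_less (Cik i k) (Dik i k) \<and> set_less (Dik i k) (Eik i k) \<and>
          set_less (Eik i k) (Fik i k) \<and> set_less (Fik i k) (Gik i k) \<and>
          set_less (Gik i k) (Iik i k) \<and> set_less (Iik i k) (Jik i k) \<and>
          set_less (Jik i k) (Aik (i+1) k)"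
      using ord1[OF i(1) less_imp_le[OF i(2)]] ord2[OF i] by blast
  qed
  have p2b: "set_less (Aik k k) (Bik k k) \<and> set_less (Bik k k) (Cik k k) \<and> set_less (Cik k k) (Dik k k)"
    by (rule ord1[OF k order.refl])
  have p3: "{(3*k+1) * aa k ..} \<subseteq> H3 k" using threshold[OF k] HE by auto
  have p5: "perm_numerical_semigroup 3 (H3 k)"
    unfolding perm_numerical_semigroup_def
  proof (intro conjI allI)
    have "UNIV - H3 k \<subseteq> {..< (3*k+1) * aa k}"
    proof
      fix x assume "x \<in> UNIV - H3 k"
      then have "x \<notin> {(3*k+1) * aa k ..}" using p3 by blast
      then show "x \<in> {..< (3*k+1) * aa k}" by simp
    qed
    then have "finite (UNIV - H3 k)" by (rule finite_subset) simp
    then show "numerical_semigroup (H3 k)" unfolding numerical_semigroup_def using sm by simp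
    have "enumerate (H3 k) ` {1..3} = SS k"
    proof -
      have "{1..3::nat} = {1,2,3}" by auto
      then show ?thesis using enum_vals[OF k] unfolding HE SS_def by simp
    qed
    then show "H3 k = gen (enumerate (H3 k) ` {1..3})" using GE by simp
    fix m
    have inf: "infinite (Hx k)" by (rule Hinf[OF k])
    have z: "0 \<in> Hx k" using smallH_iff[of 0 k] by (simp add: sm_def)
    show "bij_betw (\<lambda>j. enumerate (H3 k) (m * 3 + j) mod 3) {1..3} {..<3}"
      unfolding HE by (rule triple[OF inf z allBal[OF k]])
  qed
  show ?thesis using sm ss p2 p2b p3 GE p5 by blast
qed


end
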